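(* Let $g\ge2$ be an integer and let $k,d_1,d_2,d_3,\ell,m,n$ be positive integers with $1\le d_1,d_2,d_3\le g-1$, $\ell\le m\le n$ and $n\ge 2$, satisfying $$L_k=d_1\frac{g^\ell-1}{g-1}\cdot d_2\frac{g^m-1}{g-1}\cdot d_3\frac{g^n-1}{g-1}.$$ Then $$k<3n\frac{\log g}{\log\alpha}+1<10n\log g,$$ where $\alpha=(1+\sqrt5)/2$.
   Context: $(L_n)_{n\ge 0}$ is the Lucas sequence: $L_0=2$, $L_1=1$, $L_{n+2}=L_{n+1}+L_n$. $\log$ is the natural logarithm. *)

theory Defs
  imports Complex_Main
begin

fun lucas :: "nat \<Rightarrow> nat" where
  "lucas 0 = 2"
| "lucas (Suc 0) = 1"
| "lucas (Suc (Suc n)) = lucas (Suc n) + lucas n"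

end

theory Submission
  imports Defs
begin

lemma lucas_lb: "real (lucas (Suc n)) \<ge> ((1 + sqrt 5)/2) ^ n \<and> real (lucas (Suc (Suc n))) \<ge> ((1 + sqrt 5)/2) ^ (Suc n)"
proof (induction n)
  case 0
  have "sqrt 5 \<le> 3" by (rule real_le_lsqrt) auto
  then show ?case by simp
next
  case (Suc n)
  define a where "a = (1 + sqrt 5)/2"
  have a2: "a^2 = a + 1" unfolding a_def by (simp add: power2_eq_square algebra_simps)
  have "a ^ Suc (Suc n) = a^n * a^2" by (simp add: power_add[symmetric])
  also have "\<dots> = a^(Suc n) + a^n" using a2 by (simp add: algebra_simps)
  finally have e: "a ^ Suc (Suc n) = a^(Suc n) + a^n" .
  show ?case using Suc e unfolding a_def[symmetric] by simp
qed

lemma factor_bound: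
  fixes g d l :: nat
  assumes "g \<ge> 2" "1 \<le> d" "d \<le> g - 1" "l \<ge> 1"
  shows "0 < real d * (real g ^ l - 1) / (real g - 1)"
    and "real d * (real g ^ l - 1) / (real g - 1) < real g ^ l"
proof -
  have g1: "real g - 1 > 0" using assms by simp
  have gl: "real g ^ l > 1" using assms by (simp add: one_less_power)
  show "0 < real d * (real g ^ l - 1) / (real g - 1)" using g1 gl assms by simp
  have "real d \<le> real g - 1" using assms by linarith
  then have "real d * (real g ^ l - 1) \<le> (real g - 1) * (real g ^ l - 1)"
    using gl by (intro mult_right_mono) auto
  then have "real d * (real g ^ l - 1) / (real g - 1) \<le> real g ^ l - 1"
    using g1 by (simp add: divide_le_eq mult.commute)
  then show "real d * (real g ^ l - 1) / (real g - 1) < real g ^ l" by simp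
qed

theorem lemma4p1:
  fixes g k d1 d2 d3 l m n :: nat
  assumes "g \<ge> 2" and "k \<ge> 1" and "l \<ge> 1"
    and "1 \<le> d1" and "d1 \<le> g - 1"
    and "1 \<le> d2" and "d2 \<le> g - 1"
    and "1 \<le> d3" and "d3 \<le> g - 1"
    and "l \<le> m" and "m \<le> n" and "n \<ge> 2"
    and "real (lucas k) = (real d1 * (real g ^ l - 1) / (real g - 1))
                         * (real d2 * (real g ^ m - 1) / (real g - 1))
                         * (real d3 * (real g ^ n - 1) / (real g - 1))"
  shows "real k < 3 * real n * ln (real g) / ln ((1 + sqrt 5) / 2) + 1
       \<and> 3 * real n * ln (real g) / ln ((1 + sqrt 5) / 2) + 1 < 10 * real n * ln (real g)"
proof -
  define \<alpha> where "\<alpha> = (1 + sqrt 5)/2"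
  define a where "a = ln \<alpha>"
  define c where "c = ln (real g)"
  have s5: "sqrt 5 \<le> 2.24" by (rule real_le_lsqrt) (auto simp: power2_eq_square)
  have s5b: "sqrt 5 \<ge> 2" by (rule real_le_rsqrt) auto
  have ap: "\<alpha> > 0" unfolding \<alpha>_def using s5b by simp
  have "ln (1/\<alpha>) \<le> 1/\<alpha> - 1" using ap by (intro ln_le_minus_one) simp
  hence "a \<ge> 1 - 1/\<alpha>" unfolding a_def using ap by (simp add: ln_div)
  moreover have "1/\<alpha> = \<alpha> - 1"
  proof -
    have "\<alpha> * (\<alpha> - 1) = 1" unfolding \<alpha>_def
      by (simp add: algebra_simps power2_eq_square[symmetric])
    thus ?thesis using ap by (simp add: field_simps)
  qed
  ultimately have a38: "a \<ge> 19/50" unfolding \<alpha>_def using s5 by simp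
  have g0: "real g > 0" using assms by simp
  have "ln (1/real g) \<le> 1/real g - 1" using g0 by (intro ln_le_minus_one) simp
  hence "c \<ge> 1 - 1/real g" unfolding c_def using g0 by (simp add: ln_div)
  moreover have "1/real g \<le> 1/2" using assms by simp
  ultimately have c12: "c \<ge> 1/2" by simp
  obtain j where kj: "k = Suc j" using assms(2) by (cases k) auto
  have lb: "real (lucas k) \<ge> \<alpha> ^ j" using conjunct1[OF lucas_lb[of j]] kj unfolding \<alpha>_def by simp
  have f1: "0 < real d1 * (real g ^ l - 1) / (real g - 1)"
       "real d1 * (real g ^ l - 1) / (real g - 1) < real g ^ l"
    using factor_bound[of g d1 l] assms by auto
  have f2: "0 < real d2 * (real g ^ m - 1) / (real g - 1)"
       "real d2 * (real g ^ m - 1) / (real g - 1) < real g ^ m"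
    using factor_bound[of g d2 m] assms by auto
  have f3: "0 < real d3 * (real g ^ n - 1) / (real g - 1)"
       "real d3 * (real g ^ n - 1) / (real g - 1) < real g ^ n"
    using factor_bound[of g d3 n] assms by auto
  have "real (lucas k) < real g ^ l * real g ^ m * real g ^ n"
    unfolding assms(13)
    using g0 by (intro mult_strict_mono f1 f2 f3 less_imp_le mult_pos_pos) auto
  also have "\<dots> \<le> real g ^ n * real g ^ n * real g ^ n"
    using assms by (intro mult_mono power_increasing) auto
  also have "\<dots> = real g ^ (3*n)" proof - have "3*n = n+n+n" by simp thus ?thesis by (simp only: power_add) qed
  finally have "\<alpha> ^ j < real g ^ (3*n)" using lb by linarith
  hence "ln (\<alpha> ^ j) < ln (real g ^ (3*n))" using ap g0 by simp
  hence "real j * a < 3 * real n * c" unfolding a_def c_def using ap g0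
    by (simp add: ln_realpow)
  hence "real j < 3 * real n * c / a" using a38 by (simp add: field_simps)
  hence A: "real k < 3 * real n * c / a + 1" using kj by simp
  have "3 * real n * c / a \<le> 3 * real n * c / (19/50)"
    using a38 c12 by (intro divide_left_mono) auto
  moreover have "3 * real n * c / (19/50) + 1 < 10 * real n * c"
  proof -
    have n2: "real n \<ge> 2" using assms(12) by simp
    have "real n * c \<ge> 2 * (1/2)" using c12 n2 by (intro mult_mono) auto
    hence "real n * c \<ge> 1" by simp
    thus ?thesis by simp
  qed
  ultimately have B: "3 * real n * c / a + 1 < 10 * real n * c" by simp
  show ?thesis using A B unfolding a_def c_def \<alpha>_def by simp
qed

end
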